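(* Let $w,c\ge 0$ and let $(W_1,\ldots,W_n)$ be a $w$-colourable grading of a graph $G$ with $\chi(G)>w+2c$. Then there exist subsets $X,Y$ of $V(G)$ such that: $G[X]$ and $G[Y]$ are both connected; every vertex in $Y$ is earlier than every vertex in $X$; some vertex in $X$ has a neighbour in $Y$; and $\chi(X)>c$ and $\chi(Y)>c$.
   Context: Graphs are finite and simple. For $X\subseteq V(G)$, $G[X]$ is the induced subgraph and $\chi(X)$ means $\chi(G[X])$. A grading of $G$ is a sequence $(W_1,\ldots,W_n)$ of pairwise disjoint subsets of $V(G)$ with union $V(G)$; it is $w$-colourable if $\chi(G[W_i])\le w$ for $1\le i\le n$. A vertex $u$ is earlier than a vertex $v$ (with respect to the grading) if $u\in W_i$ and $v\in W_j$ with $i<j$. *)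

theory Defs
  imports Main
begin

definition simple_graph :: "'a set \<Rightarrow> ('a \<Rightarrow> 'a \<Rightarrow> bool) \<Rightarrow> bool" where
  "simple_graph V E \<longleftrightarrow> finite V \<and> (\<forall>u v. E u v \<longrightarrow> u \<in> V \<and> v \<in> V)
     \<and> (\<forall>u v. E u v \<longrightarrow> E v u) \<and> (\<forall>v. \<not> E v v)"

definition proper_colouring :: "('a \<Rightarrow> 'a \<Rightarrow> bool) \<Rightarrow> 'a set \<Rightarrow> nat \<Rightarrow> ('a \<Rightarrow> nat) \<Rightarrow> bool" where
  "proper_colouring E X k f \<longleftrightarrow> (\<forall>v\<in>X. f v < k) \<and> (\<forall>u\<in>X. \<forall>v\<in>X. E u v \<longrightarrow> f u \<noteq> f v)"

definition chi :: "('a \<Rightarrow> 'a \<Rightarrow> bool) \<Rightarrow> 'a set \<Rightarrow> nat" where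
  "chi E X = (LEAST k. \<exists>f. proper_colouring E X k f)"

definition walk_in :: "('a \<Rightarrow> 'a \<Rightarrow> bool) \<Rightarrow> 'a set \<Rightarrow> 'a list \<Rightarrow> bool" where
  "walk_in E X p \<longleftrightarrow> p \<noteq> [] \<and> set p \<subseteq> X \<and> (\<forall>i. Suc i < length p \<longrightarrow> E (p ! i) (p ! Suc i))"

definition connected_induced :: "('a \<Rightarrow> 'a \<Rightarrow> bool) \<Rightarrow> 'a set \<Rightarrow> bool" where
  "connected_induced E X \<longleftrightarrow> X \<noteq> {} \<and>
     (\<forall>u\<in>X. \<forall>v\<in>X. \<exists>p. walk_in E X p \<and> hd p = u \<and> last p = v)"

definition grading :: "'a set \<Rightarrow> nat \<Rightarrow> (nat \<Rightarrow> 'a set) \<Rightarrow> bool" where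
  "grading V n W \<longleftrightarrow> (\<forall>i\<in>{1..n}. \<forall>j\<in>{1..n}. i \<noteq> j \<longrightarrow> W i \<inter> W j = {})
     \<and> (\<Union>i\<in>{1..n}. W i) = V"

definition w_colourable_grading :: "('a \<Rightarrow> 'a \<Rightarrow> bool) \<Rightarrow> 'a set \<Rightarrow> nat \<Rightarrow> (nat \<Rightarrow> 'a set) \<Rightarrow> nat \<Rightarrow> bool" where
  "w_colourable_grading E V n W w \<longleftrightarrow> grading V n W \<and> (\<forall>i\<in>{1..n}. chi E (W i) \<le> w)"

definition earlier :: "nat \<Rightarrow> (nat \<Rightarrow> 'a set) \<Rightarrow> 'a \<Rightarrow> 'a \<Rightarrow> bool" where
  "earlier n W u v \<longleftrightarrow> (\<exists>i\<in>{1..n}. \<exists>j\<in>{1..n}. u \<in> W i \<and> v \<in> W j \<and> i < j)"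

end

theory Submission
  imports Defs
begin


lemma walk_in_single[simp]: "walk_in E X [x] \<longleftrightarrow> x \<in> X"
  by (simp add: walk_in_def)

lemma walk_in_Cons2: "walk_in E X (x # y # p) \<longleftrightarrow> x \<in> X \<and> E x y \<and> walk_in E X (y # p)"
proof
  assume a: "walk_in E X (x # y # p)"
  have "\<And>i. Suc i < length (y # p) \<Longrightarrow> E ((y # p) ! i) ((y # p) ! Suc i)"
  proof -
    fix i assume "Suc i < length (y # p)"
    then have "Suc (Suc i) < length (x # y # p)" by simp
    with a have "E ((x # y # p) ! Suc i) ((x # y # p) ! Suc (Suc i))" unfolding walk_in_def by blast
    then show "E ((y # p) ! i) ((y # p) ! Suc i)" by simp
  qed
  moreover have "E x y" using a unfolding walk_in_def by (metis length_Cons nth_Cons_0 nth_Cons_Suc zero_less_Suc Suc_less_eq)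
  ultimately show "x \<in> X \<and> E x y \<and> walk_in E X (y # p)" using a unfolding walk_in_def by auto
next
  assume a: "x \<in> X \<and> E x y \<and> walk_in E X (y # p)"
  have "\<And>i. Suc i < length (x # y # p) \<Longrightarrow> E ((x # y # p) ! i) ((x # y # p) ! Suc i)"
  proof -
    fix i assume i: "Suc i < length (x # y # p)"
    show "E ((x # y # p) ! i) ((x # y # p) ! Suc i)"
    proof (cases i)
      case 0 then show ?thesis using a by simp
    next
      case (Suc j)
      then have "Suc j < length (y # p)" using i by simp
      then have "E ((y # p) ! j) ((y # p) ! Suc j)" using a unfolding walk_in_def by blast
      then show ?thesis using Suc by simp
    qed
  qed
  then show "walk_in E X (x # y # p)" using a unfolding walk_in_def by auto
qed

lemma walk_mono: "walk_in E X p \<Longrightarrow> X \<subseteq> Y \<Longrightarrow> walk_in E Y p"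
  unfolding walk_in_def by blast

lemma walk_append:
  "walk_in E X p \<Longrightarrow> walk_in E Y q \<Longrightarrow> last p = hd q \<Longrightarrow>
   walk_in E (X \<union> Y) (p @ tl q) \<and> hd (p @ tl q) = hd p \<and> last (p @ tl q) = last q"
proof (induction p)
  case Nil then show ?case by (simp add: walk_in_def)
next
  case (Cons a p)
  show ?case
  proof (cases p)
    case Nil
    then have q: "q = a # tl q" using Cons.prems by (metis last.simps list.collapse walk_in_def)
    then have "a # tl q = q" by simp
    then show ?thesis using Nil Cons.prems walk_mono[of E Y q "X \<union> Y"] by (metis Un_upper2 append_Cons append_Nil hd_Cons_tl last_ConsL list.sel(1) walk_in_def)
  next
    case (Cons b p')
    have w: "a \<in> X" "E a b" "walk_in E X p" using Cons.prems(1) Cons by (auto simp: walk_in_Cons2)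
    have l: "last p = hd q" using Cons.prems(3) Cons by simp
    from Cons.IH[OF w(3) Cons.prems(2) l] have ih: "walk_in E (X \<union> Y) (p @ tl q)"
      "hd (p @ tl q) = hd p" "last (p @ tl q) = last q" by auto
    have "p @ tl q = b # (p' @ tl q)" using Cons by simp
    then have "walk_in E (X \<union> Y) (a # b # (p' @ tl q))" using ih w by (simp add: walk_in_Cons2)
    then show ?thesis using Cons ih by simp
  qed
qed

lemma conn_union:
  assumes "connected_induced E A" "connected_induced E B" "z \<in> A" "z \<in> B"
  shows "connected_induced E (A \<union> B)"
  unfolding connected_induced_def
proof (intro conjI ballI)
  show "A \<union> B \<noteq> {}" using assms by auto
  fix u v assume u: "u \<in> A \<union> B" and v: "v \<in> A \<union> B"
  obtain p where p: "walk_in E (A \<union> B) p" "hd p = u" "last p = z"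
  proof (cases "u \<in> A")
    case True then show ?thesis using assms that unfolding connected_induced_def by (meson Un_upper1 walk_mono)
  next
    case False then have "u \<in> B" using u by simp
    then show ?thesis using assms that unfolding connected_induced_def by (meson Un_upper2 walk_mono)
  qed
  obtain q where q: "walk_in E (A \<union> B) q" "hd q = z" "last q = v"
  proof (cases "v \<in> A")
    case True then show ?thesis using assms that unfolding connected_induced_def by (meson Un_upper1 walk_mono)
  next
    case False then have "v \<in> B" using v by simp
    then show ?thesis using assms that unfolding connected_induced_def by (meson Un_upper2 walk_mono)
  qed
  from walk_append[OF p(1) q(1)] p q
  show "\<exists>p. walk_in E (A \<union> B) p \<and> hd p = u \<and> last p = v" by auto
qed

lemma conn_single: "connected_induced E {x}"
  unfolding connected_induced_def by (auto intro!: exI[of _ "[x]"])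

lemma conn_pair:
  assumes "E x y" "E y x" shows "connected_induced E {x, y}"
  unfolding connected_induced_def
proof (intro conjI ballI)
  show "{x, y} \<noteq> {}" by simp
  fix u v assume u: "u \<in> {x, y}" and v: "v \<in> {x, y}"
  show "\<exists>p. walk_in E {x, y} p \<and> hd p = u \<and> last p = v"
  proof (cases "u = v")
    case True then show ?thesis using u by (intro exI[of _ "[u]"]) auto
  next
    case False
    then have "E u v" using u v assms by auto
    then show ?thesis using u v by (intro exI[of _ "[u, v]"]) (auto simp: walk_in_Cons2)
  qed
qed

lemma conn_add:
  assumes "connected_induced E Z" "z \<in> Z" "E z x" "E x z"
  shows "connected_induced E (insert x Z)"
proof -
  have "connected_induced E (Z \<union> {z, x})"
    by (rule conn_union[OF assms(1) conn_pair[of E z x, OF assms(3,4)] assms(2)]) simp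
  moreover have "Z \<union> {z, x} = insert x Z" using assms(2) by auto
  ultimately show ?thesis by simp
qed

lemma conn_ne: "connected_induced E Z \<Longrightarrow> Z \<noteq> {}"
  unfolding connected_induced_def by simp

lemma chi_le: "proper_colouring E S k f \<Longrightarrow> chi E S \<le> k"
  unfolding chi_def by (rule Least_le) blast

lemma col_exists:
  assumes "finite S" "\<forall>v. \<not> E v v"
  shows "\<exists>f. proper_colouring E S (card S) f"
proof -
  obtain h where h: "bij_betw h S {0..<card S}" using ex_bij_betw_finite_nat[OF assms(1)] by blast
  have "proper_colouring E S (card S) h"
    unfolding proper_colouring_def
  proof (intro conjI ballI impI)
    fix v assume "v \<in> S" then show "h v < card S" using h by (auto simp: bij_betw_def)
  next
    fix u v assume "u \<in> S" "v \<in> S" "E u v"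
    then have "u \<noteq> v" using assms(2) by auto
    then show "h u \<noteq> h v" using h \<open>u \<in> S\<close> \<open>v \<in> S\<close> by (auto simp: bij_betw_def inj_on_def)
  qed
  then show ?thesis by blast
qed

lemma chi_ex:
  assumes "finite S" "\<forall>v. \<not> E v v"
  shows "\<exists>f. proper_colouring E S (chi E S) f"
  unfolding chi_def by (rule LeastI_ex) (use col_exists[of S E, OF assms] in blast)

lemma pc_mono: "proper_colouring E S k f \<Longrightarrow> T \<subseteq> S \<Longrightarrow> k \<le> k' \<Longrightarrow> proper_colouring E T k' f"
  unfolding proper_colouring_def by (meson less_le_trans subsetD)

lemma chi_mono:
  assumes "finite S" "\<forall>v. \<not> E v v" "T \<subseteq> S"
  shows "chi E T \<le> chi E S"
  using chi_ex[of S E, OF assms(1,2)] pc_mono[OF _ assms(3) order_refl] chi_le by blast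

lemma small_col:
  assumes "finite S" "\<forall>v. \<not> E v v" "chi E S \<le> c"
  shows "\<exists>f. proper_colouring E S c f"
  using chi_ex[of S E, OF assms(1,2)] pc_mono[OF _ order_refl assms(3)] by blast



definition allsmall :: "('a \<Rightarrow> 'a \<Rightarrow> bool) \<Rightarrow> nat \<Rightarrow> 'a set \<Rightarrow> bool" where
  "allsmall E c S \<longleftrightarrow> (\<forall>Z. Z \<subseteq> S \<longrightarrow> connected_induced E Z \<longrightarrow> chi E Z \<le> c)"

definition lowset :: "(nat \<Rightarrow> 'a set) \<Rightarrow> nat \<Rightarrow> 'a set" where
  "lowset W j = (\<Union>i\<in>{1..j}. W i)"

definition highset :: "(nat \<Rightarrow> 'a set) \<Rightarrow> nat \<Rightarrow> nat \<Rightarrow> 'a set" where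
  "highset W n j = (\<Union>i\<in>{j..n}. W i)"

lemma allsmall_anti: "allsmall E c S \<Longrightarrow> T \<subseteq> S \<Longrightarrow> allsmall E c T"
  unfolding allsmall_def by blast

lemma comp_col:
  assumes irr: "\<forall>v. \<not> E v v" and sym: "\<forall>u v. E u v \<longrightarrow> E v u"
  shows "finite S \<Longrightarrow> allsmall E c S \<Longrightarrow> \<exists>f. proper_colouring E S c f"
proof (induction "card S" arbitrary: S rule: less_induct)
  case less
  show ?case
  proof (cases "S = {}")
    case True then show ?thesis unfolding proper_colouring_def by blast
  next
    case False
    then obtain v where v: "v \<in> S" by blast
    define K where "K = {u. \<exists>Z. Z \<subseteq> S \<and> connected_induced E Z \<and> v \<in> Z \<and> u \<in> Z}"
    have KS: "K \<subseteq> S" unfolding K_def by blast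
    have vK: "v \<in> K" unfolding K_def using v conn_single[of E v] by blast
    have connK: "connected_induced E K"
      unfolding connected_induced_def
    proof (intro conjI ballI)
      show "K \<noteq> {}" using vK by blast
      fix u1 u2 assume "u1 \<in> K" "u2 \<in> K"
      then obtain Z1 Z2 where Z1: "Z1 \<subseteq> S" "connected_induced E Z1" "v \<in> Z1" "u1 \<in> Z1"
        and Z2: "Z2 \<subseteq> S" "connected_induced E Z2" "v \<in> Z2" "u2 \<in> Z2"
        unfolding K_def by blast
      have c12: "connected_induced E (Z1 \<union> Z2)" using conn_union[OF Z1(2) Z2(2) Z1(3) Z2(3)] .
      have sub: "Z1 \<union> Z2 \<subseteq> K" unfolding K_def using Z1 Z2 by blast
      from c12 obtain p where "walk_in E (Z1 \<union> Z2) p" "hd p = u1" "last p = u2"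
        unfolding connected_induced_def using Z1(4) Z2(4) by blast
      then show "\<exists>p. walk_in E K p \<and> hd p = u1 \<and> last p = u2" using walk_mono[OF _ sub] by blast
    qed
    have finK: "finite K" using KS less.prems(1) finite_subset by blast
    have "chi E K \<le> c" using less.prems(2) KS connK unfolding allsmall_def by blast
    then obtain gK where gK: "proper_colouring E K c gK" using small_col[of K E c, OF finK irr] by blast
    have "S - K \<subset> S" using vK v by blast
    then have "card (S - K) < card S" using less.prems(1) by (rule psubset_card_mono[rotated])
    moreover have "finite (S - K)" using less.prems(1) by simp
    moreover have "allsmall E c (S - K)" using allsmall_anti[OF less.prems(2)] by blast
    ultimately obtain h where h: "proper_colouring E (S - K) c h" using less.hyps by blast
    have noedge: "\<not> E u x" if "u \<in> K" "x \<in> S" "x \<notin> K" for u x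
    proof
      assume e: "E u x"
      obtain Z where Z: "Z \<subseteq> S" "connected_induced E Z" "v \<in> Z" "u \<in> Z" using \<open>u \<in> K\<close> unfolding K_def by blast
      have "E x u" using sym e by blast
      then have "connected_induced E (insert x Z)" using conn_add[of E Z u x, OF Z(2) Z(4) e] by blast
      then have "x \<in> K" unfolding K_def using Z that by blast
      then show False using that by blast
    qed
    have "proper_colouring E S c (\<lambda>u. if u \<in> K then gK u else h u)"
      unfolding proper_colouring_def
    proof (intro conjI ballI impI)
      fix u assume "u \<in> S" then show "(if u \<in> K then gK u else h u) < c"
        using gK h unfolding proper_colouring_def by auto
    next
      fix u x assume ux: "u \<in> S" "x \<in> S" "E u x"
      show "(if u \<in> K then gK u else h u) \<noteq> (if x \<in> K then gK x else h x)"
      proof (cases "u \<in> K")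
        case True
        then have "x \<in> K" using noedge ux by blast
        then show ?thesis using gK True ux unfolding proper_colouring_def by auto
      next
        case False
        have "E x u" using sym ux(3) by blast
        then have "x \<notin> K" using noedge[of x u] ux False by blast
        then show ?thesis using h False ux unfolding proper_colouring_def by auto
      qed
    qed
    then show ?thesis by blast
  qed
qed



context
  fixes V :: "'a set" and E :: "'a \<Rightarrow> 'a \<Rightarrow> bool" and n w c :: nat and W :: "nat \<Rightarrow> 'a set"
  assumes sg: "simple_graph V E"
    and gr: "grading V n W"
    and wc: "\<forall>i\<in>{1..n}. chi E (W i) \<le> w"
    and nopair: "\<forall>X Y. X \<subseteq> V \<longrightarrow> Y \<subseteq> V \<longrightarrow> connected_induced E X \<longrightarrow> connected_induced E Y
        \<longrightarrow> (\<forall>y\<in>Y. \<forall>x\<in>X. earlier n W y x) \<longrightarrow> (\<exists>x\<in>X. \<exists>y\<in>Y. E x y) \<longrightarrow> chi E X \<le> c \<or> chi E Y \<le> c"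
begin

lemma finV: "finite V" using sg unfolding simple_graph_def by blast
lemma irr: "\<forall>v. \<not> E v v" using sg unfolding simple_graph_def by blast
lemma symE: "\<forall>u v. E u v \<longrightarrow> E v u" using sg unfolding simple_graph_def by blast
lemma symE': "E u v \<Longrightarrow> E v u" using symE by blast

lemma lev_unique: "v \<in> W i \<Longrightarrow> v \<in> W j \<Longrightarrow> i \<in> {1..n} \<Longrightarrow> j \<in> {1..n} \<Longrightarrow> i = j"
  using gr unfolding grading_def by blast

lemma cover: "v \<in> V \<Longrightarrow> \<exists>i. 1 \<le> i \<and> i \<le> n \<and> v \<in> W i"
  using gr unfolding grading_def by auto

lemma W_sub: "i \<in> {1..n} \<Longrightarrow> W i \<subseteq> V"
  using gr unfolding grading_def by blast

lemma chi_mono': "T \<subseteq> S \<Longrightarrow> S \<subseteq> V \<Longrightarrow> chi E T \<le> chi E S"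
  using chi_mono[of S E T] finV irr finite_subset by blast

lemma lowset_mono: "i \<le> k \<Longrightarrow> lowset W i \<subseteq> lowset W k"
  unfolding lowset_def by (intro UN_mono) auto

lemma claim:
  "U \<subseteq> V \<Longrightarrow> \<exists>f. proper_colouring E U (w + 2 * c) f \<and>
     (\<forall>i\<in>{1..n}. \<forall>v\<in>U \<inter> W i. allsmall E c (U \<inter> lowset W i) \<longrightarrow> f v < c + w)"
proof (induction "card U" arbitrary: U rule: less_induct)
  case less
  have finU: "finite U" using finV less.prems finite_subset by blast
  show ?case
  proof (cases "allsmall E c U")
    case True
    obtain g where g: "proper_colouring E U c g" using comp_col[OF irr symE finU True] by blast
    have "proper_colouring E U (w + 2 * c) g" using pc_mono[OF g order_refl] by simp
    moreover have "\<forall>v\<in>U. g v < c + w" using g unfolding proper_colouring_def by fastforce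
    ultimately show ?thesis by blast
  next
    case False
    have "U \<inter> lowset W n = U" using less.prems gr unfolding grading_def lowset_def by blast
    then have exn: "\<not> allsmall E c (U \<inter> lowset W n)" using False by simp
    define k where "k = (LEAST j. \<not> allsmall E c (U \<inter> lowset W j))"
    have k1: "\<not> allsmall E c (U \<inter> lowset W k)" unfolding k_def by (rule LeastI[of _ n]) (rule exn)
    have kn: "k \<le> n" unfolding k_def by (rule Least_le) (rule exn)
    have k0: "k \<noteq> 0"
    proof
      assume "k = 0"
      then have "U \<inter> lowset W k = {}" unfolding lowset_def by simp
      then show False using k1 conn_ne unfolding allsmall_def by blast
    qed
    have kprev: "allsmall E c (U \<inter> lowset W (k - 1))"
      using not_less_Least[of "k - 1" "\<lambda>j. \<not> allsmall E c (U \<inter> lowset W j)"] k0 unfolding k_def[symmetric] by simp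
    define Ak where "Ak = U \<inter> lowset W k"
    define Ak1 where "Ak1 = U \<inter> lowset W (k - 1)"
    define Bk where "Bk = U \<inter> highset W n (Suc k)"
    have memA: "x \<in> Ak \<longleftrightarrow> x \<in> U \<and> (\<exists>i. 1 \<le> i \<and> i \<le> k \<and> x \<in> W i)" for x
      unfolding Ak_def lowset_def by auto
    have memA1: "x \<in> Ak1 \<longleftrightarrow> x \<in> U \<and> (\<exists>i. 1 \<le> i \<and> i \<le> k - 1 \<and> x \<in> W i)" for x
      unfolding Ak1_def lowset_def by auto
    have memB: "x \<in> Bk \<longleftrightarrow> x \<in> U \<and> (\<exists>i. Suc k \<le> i \<and> i \<le> n \<and> x \<in> W i)" for x
      unfolding Bk_def highset_def by auto
    have U_split: "U = Ak \<union> Bk"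
    proof
      show "U \<subseteq> Ak \<union> Bk"
      proof
        fix x assume "x \<in> U"
        then obtain i where "1 \<le> i" "i \<le> n" "x \<in> W i" using cover less.prems by blast
        then show "x \<in> Ak \<union> Bk" using memA memB \<open>x \<in> U\<close> by (cases "i \<le> k") auto
      qed
    qed (use memA memB in blast)
    have AB_disj: "Ak \<inter> Bk = {}"
    proof (rule ccontr)
      assume "Ak \<inter> Bk \<noteq> {}"
      then obtain x i j where "1 \<le> i" "i \<le> k" "x \<in> W i" "Suc k \<le> j" "j \<le> n" "x \<in> W j"
        using memA memB by blast
      then show False using lev_unique[of x i j] kn by simp
    qed
    have Ak_split: "Ak = Ak1 \<union> (U \<inter> W k)"
    proof
      show "Ak \<subseteq> Ak1 \<union> (U \<inter> W k)"
      proof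
        fix x assume "x \<in> Ak"
        then obtain i where "x \<in> U" "1 \<le> i" "i \<le> k" "x \<in> W i" using memA by blast
        then show "x \<in> Ak1 \<union> (U \<inter> W k)" using memA1 by (cases "i = k") auto
      qed
      show "Ak1 \<union> (U \<inter> W k) \<subseteq> Ak"
      proof
        fix x assume "x \<in> Ak1 \<union> (U \<inter> W k)"
        then show "x \<in> Ak"
        proof
          assume "x \<in> Ak1"
          then obtain i where "x \<in> U" "1 \<le> i" "i \<le> k - 1" "x \<in> W i" using memA1 by blast
          then show ?thesis using memA[of x] by (meson diff_le_self order_trans)
        next
          assume "x \<in> U \<inter> W k"
          then show ?thesis using memA[of x] k0 by (metis IntD1 IntD2 One_nat_def Suc_leI neq0_conv order_refl)
        qed
      qed
    qed
    have A1_W: "Ak1 \<inter> W k = {}"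
    proof (rule ccontr)
      assume "Ak1 \<inter> W k \<noteq> {}"
      then obtain x i where xi: "1 \<le> i" "i \<le> k - 1" "x \<in> W i" "x \<in> W k" using memA1 by blast
      have "i \<in> {1..n}" "k \<in> {1..n}" using xi kn k0 by auto
      then have "i = k" using lev_unique[of x i k] xi by blast
      then show False using xi k0 by simp
    qed
    have earlierAB: "earlier n W y x" if yA: "y \<in> Ak" and xB: "x \<in> Bk" for x y
    proof -
      obtain i where i: "1 \<le> i" "i \<le> k" "y \<in> W i" using memA[THEN iffD1, OF yA] by blast
      obtain j where j: "Suc k \<le> j" "j \<le> n" "x \<in> W j" using memB[THEN iffD1, OF xB] by blast
      have "i \<in> {1..n}" "j \<in> {1..n}" "i < j" using i(1,2) j(1,2) kn by simp_all
      then show ?thesis unfolding earlier_def using i(3) j(3) by blast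
    qed
    have AkV: "Ak \<subseteq> V" using less.prems unfolding Ak_def by blast
    have BkV: "Bk \<subseteq> V" using less.prems unfolding Bk_def by blast
    define P where "P = {v. \<exists>Y. Y \<subseteq> Ak \<and> connected_induced E Y \<and> c < chi E Y \<and> v \<in> Y}"
    define Q where "Q = Ak - P"
    define N where "N = {v. \<exists>Z. Z \<subseteq> Bk \<and> connected_induced E Z \<and> v \<in> Z \<and> (\<exists>z\<in>Z. \<exists>p\<in>P. E z p)}"
    define M where "M = Bk - N"
    have PA: "P \<subseteq> Ak" unfolding P_def by blast
    have NB: "N \<subseteq> Bk" unfolding N_def by blast
    have Pne: "P \<noteq> {}"
    proof -
      obtain Z where Z: "Z \<subseteq> Ak" "connected_induced E Z" "\<not> chi E Z \<le> c"
        using k1 unfolding allsmall_def Ak_def by blast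
      obtain z where z: "z \<in> Z" using conn_ne[OF Z(2)] by blast
      have "c < chi E Z" using Z(3) by simp
      then have "z \<in> P" unfolding P_def using Z(1,2) z by blast
      then show ?thesis by blast
    qed
    have noPQ: "\<not> E u x" if "u \<in> P" "x \<in> Q" for u x
    proof
      assume e: "E u x"
      obtain Y where Y: "Y \<subseteq> Ak" "connected_induced E Y" "c < chi E Y" "u \<in> Y" using \<open>u \<in> P\<close> unfolding P_def by blast
      have "connected_induced E (insert x Y)" using conn_add[of E Y u x, OF Y(2) Y(4) e symE'[OF e]] .
      moreover have "insert x Y \<subseteq> Ak" using Y(1) \<open>x \<in> Q\<close> unfolding Q_def by blast
      moreover have "c < chi E (insert x Y)" using Y(3) chi_mono'[of Y "insert x Y"] AkV calculation(2) by fastforce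
      ultimately have "x \<in> P" unfolding P_def by blast
      then show False using \<open>x \<in> Q\<close> unfolding Q_def by blast
    qed
    have noPM: "\<not> E m p" if "p \<in> P" "m \<in> M" for p m
    proof
      assume "E m p"
      then have "m \<in> N" unfolding N_def using that conn_single[of E m] unfolding M_def
        by (intro CollectI exI[of _ "{m}"]) auto
      then show False using that unfolding M_def by blast
    qed
    have noNM: "\<not> E x m" if "x \<in> N" "m \<in> M" for x m
    proof
      assume e: "E x m"
      obtain Z where Z: "Z \<subseteq> Bk" "connected_induced E Z" "x \<in> Z" "\<exists>z\<in>Z. \<exists>p\<in>P. E z p"
        using \<open>x \<in> N\<close> unfolding N_def by blast
      have "connected_induced E (insert m Z)" using conn_add[of E Z x m, OF Z(2) Z(3) e symE'[OF e]] .
      moreover have "insert m Z \<subseteq> Bk" using Z(1) \<open>m \<in> M\<close> unfolding M_def by blast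
      ultimately have "m \<in> N" unfolding N_def using Z(4) by blast
      then show False using \<open>m \<in> M\<close> unfolding M_def by blast
    qed
    have smallN: "allsmall E c N"
      unfolding allsmall_def
    proof (intro allI impI)
      fix Z assume ZN: "Z \<subseteq> N" and cZ: "connected_induced E Z"
      show "chi E Z \<le> c"
      proof (rule ccontr)
        assume big: "\<not> chi E Z \<le> c"
        obtain z0 where z0: "z0 \<in> Z" using conn_ne[OF cZ] by blast
        then obtain Z0 z p where Z0: "Z0 \<subseteq> Bk" "connected_induced E Z0" "z0 \<in> Z0" "z \<in> Z0" "p \<in> P" "E z p"
          using ZN unfolding N_def by blast
        obtain Y where Y: "Y \<subseteq> Ak" "connected_induced E Y" "c < chi E Y" "p \<in> Y" using Z0(5) unfolding P_def by blast
        define X where "X = Z \<union> Z0"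
        have cX: "connected_induced E X" unfolding X_def using conn_union[OF cZ Z0(2) z0 Z0(3)] .
        have XB: "X \<subseteq> Bk" unfolding X_def using ZN NB Z0(1) by blast
        have "chi E Z \<le> chi E X" using chi_mono'[of Z X] XB BkV unfolding X_def by blast
        then have bX: "\<not> chi E X \<le> c" using big by simp
        have "\<forall>y\<in>Y. \<forall>x\<in>X. earlier n W y x" using earlierAB Y(1) XB by blast
        moreover have "\<exists>x\<in>X. \<exists>y\<in>Y. E x y" using Z0(4,6) Y(4) unfolding X_def by blast
        ultimately have "chi E X \<le> c \<or> chi E Y \<le> c"
          using nopair[rule_format, of X Y] XB BkV Y(1) AkV cX Y(2) by blast
        then show False using bX Y(3) by simp
      qed
    qed
    define U' where "U' = Q \<union> M"
    have U'U: "U' \<subseteq> U" unfolding U'_def Q_def M_def using U_split by blast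
    have PU': "P \<inter> U' = {}" unfolding U'_def Q_def M_def using PA AB_disj by blast
    have "U' \<subset> U" using U'U PU' Pne PA U_split by blast
    then have cardU': "card U' < card U" using finU psubset_card_mono by blast
    obtain f' where f': "proper_colouring E U' (w + 2 * c) f'"
      and early': "\<forall>i\<in>{1..n}. \<forall>v\<in>U' \<inter> W i. allsmall E c (U' \<inter> lowset W i) \<longrightarrow> f' v < c + w"
      using less.hyps[OF cardU'] U'U less.prems by blast
    have Qearly: "f' v < c + w" if vQ: "v \<in> Q" for v
    proof -
      obtain i where i: "1 \<le> i" "i \<le> k" "v \<in> W i" using memA[THEN iffD1, of v] vQ unfolding Q_def by blast
      have "allsmall E c (U' \<inter> lowset W i)"
        unfolding allsmall_def
      proof (intro allI impI)
        fix Z assume ZU: "Z \<subseteq> U' \<inter> lowset W i" and cZ: "connected_induced E Z"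
        have "lowset W i \<subseteq> lowset W k" using i(2) by (rule lowset_mono)
        then have "Z \<subseteq> Ak" using ZU U'U unfolding Ak_def by blast
        then have ZQ: "Z \<subseteq> Q" using ZU AB_disj unfolding U'_def M_def by blast
        show "chi E Z \<le> c"
        proof (rule ccontr)
          assume "\<not> chi E Z \<le> c"
          then have "Z \<subseteq> P" unfolding P_def using \<open>Z \<subseteq> Ak\<close> cZ by (auto simp: not_le)
          then show False using ZQ conn_ne[OF cZ] unfolding Q_def by blast
        qed
      qed
      moreover have "v \<in> U' \<inter> W i" using that i unfolding U'_def by blast
      ultimately show ?thesis using early' i kn by auto
    qed
    have finAk1: "finite Ak1" using finU unfolding Ak1_def by simp
    obtain g1 where g1: "proper_colouring E Ak1 c g1" using comp_col[OF irr symE finAk1 kprev[folded Ak1_def]] by blast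
    have kr: "k \<in> {1..n}" using k0 kn by simp
    have finWk: "finite (W k)" using W_sub[OF kr] finV finite_subset by blast
    obtain g2 where g2: "proper_colouring E (W k) w g2" using small_col[of "W k" E w, OF finWk irr] wc kr by blast
    have finN: "finite N" using NB finU finite_subset unfolding Bk_def by blast
    obtain g3 where g3: "proper_colouring E N c g3" using comp_col[OF irr symE finN smallN] by blast
    define f where "f v = (if v \<in> Q \<union> M then f' v else if v \<in> N then c + w + g3 v
                            else if v \<in> W k then c + g2 v else g1 v)" for v
    have parts: "v \<in> Q \<union> M \<or> v \<in> N \<or> (v \<in> P \<and> v \<in> W k) \<or> (v \<in> P \<and> v \<notin> W k \<and> v \<in> Ak1)" if "v \<in> U" for v
      using that U_split Ak_split unfolding Q_def M_def by blast
    have fQM: "f v = f' v" if "v \<in> Q \<union> M" for v using that unfolding f_def by simp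
    have fN: "f v = c + w + g3 v" if "v \<in> N" for v
    proof -
      have "v \<notin> Q \<union> M" using that NB AB_disj unfolding Q_def M_def by blast
      then show ?thesis using that unfolding f_def by simp
    qed
    have fPW: "f v = c + g2 v" if "v \<in> P" "v \<in> W k" for v
      using that PA AB_disj NB unfolding f_def Q_def M_def by auto
    have fP1: "f v = g1 v" if "v \<in> P" "v \<notin> W k" for v
      using that PA AB_disj NB unfolding f_def Q_def M_def by auto
    have rQM: "f' v < w + 2 * c" if "v \<in> Q \<union> M" for v using f' that unfolding proper_colouring_def U'_def by blast
    have r3: "g3 v < c" if "v \<in> N" for v using g3 that unfolding proper_colouring_def by blast
    have r2: "g2 v < w" if "v \<in> W k" for v using g2 that unfolding proper_colouring_def by blast
    have r1: "g1 v < c" if "v \<in> Ak1" for v using g1 that unfolding proper_colouring_def by blast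
    have PQM: "v \<notin> Q \<union> M" if "v \<in> P" for v using that PU' unfolding U'_def by blast
    have NQM: "v \<notin> Q \<union> M" if "v \<in> N" for v using that NB AB_disj unfolding Q_def M_def by blast
    have NP: "v \<notin> P" if "v \<in> N" for v using that NB PA AB_disj by blast
    have QMcases: "v \<in> Q \<or> v \<in> M" if "v \<in> Q \<union> M" for v using that by blast
    have propc: "proper_colouring E U (w + 2 * c) f"
      unfolding proper_colouring_def
    proof (intro conjI ballI impI)
      fix v assume "v \<in> U"
      then have "v \<in> Q \<union> M \<or> v \<in> N \<or> (v \<in> P \<and> v \<in> W k) \<or> (v \<in> P \<and> v \<notin> W k \<and> v \<in> Ak1)" by (rule parts)
      then show "f v < w + 2 * c"
      proof (elim disjE conjE)
        assume "v \<in> Q \<union> M" then show ?thesis using fQM rQM by simp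
      next
        assume "v \<in> N" then show ?thesis using fN[of v] r3[of v] by simp
      next
        assume "v \<in> P" "v \<in> W k" then show ?thesis using fPW[of v] r2[of v] by simp
      next
        assume "v \<in> P" "v \<notin> W k" "v \<in> Ak1" then show ?thesis using fP1[of v] r1[of v] by simp
      qed
    next
      fix u x assume u: "u \<in> U" and x: "x \<in> U" and e: "E u x"
      have e': "E x u" using symE'[OF e] .
      have fpe: "f' u \<noteq> f' x" if "u \<in> Q \<union> M" "x \<in> Q \<union> M"
        using f' that e unfolding proper_colouring_def U'_def by blast
      have g3e: "g3 u \<noteq> g3 x" if "u \<in> N" "x \<in> N" using g3 that e unfolding proper_colouring_def by blast
      have g2e: "g2 u \<noteq> g2 x" if "u \<in> W k" "x \<in> W k" using g2 that e unfolding proper_colouring_def by blast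
      have g1e: "g1 u \<noteq> g1 x" if "u \<in> Ak1" "x \<in> Ak1" using g1 that e unfolding proper_colouring_def by blast
      have "u \<in> Q \<union> M \<or> u \<in> N \<or> (u \<in> P \<and> u \<in> W k) \<or> (u \<in> P \<and> u \<notin> W k \<and> u \<in> Ak1)" using parts u by blast
      moreover have "x \<in> Q \<union> M \<or> x \<in> N \<or> (x \<in> P \<and> x \<in> W k) \<or> (x \<in> P \<and> x \<notin> W k \<and> x \<in> Ak1)" using parts x by blast
      ultimately show "f u \<noteq> f x"
      proof (elim disjE conjE)
        assume "u \<in> Q \<union> M" "x \<in> Q \<union> M" then show ?thesis using fQM fpe by simp
      next
        assume a: "u \<in> Q \<union> M" "x \<in> N"
        then show ?thesis
        proof (cases "u \<in> Q")
          case True then show ?thesis using a fQM[of u] fN[of x] Qearly[of u] by simp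
        next
          case False then have "u \<in> M" using a by blast
          then show ?thesis using noNM[OF a(2)] e' by blast
        qed
      next
        assume a: "u \<in> Q \<union> M" "x \<in> P" "x \<in> W k"
        then show ?thesis using noPQ[of x u] noPM[of x u] e e' by blast
      next
        assume a: "u \<in> Q \<union> M" "x \<in> P" "x \<notin> W k" "x \<in> Ak1"
        then show ?thesis using noPQ[of x u] noPM[of x u] e e' by blast
      next
        assume a: "u \<in> N" "x \<in> Q \<union> M"
        then show ?thesis
        proof (cases "x \<in> Q")
          case True then show ?thesis using a fQM[of x] fN[of u] Qearly[of x] by simp
        next
          case False then have "x \<in> M" using a by blast
          then show ?thesis using noNM[OF a(1)] e by blast
        qed
      next
        assume "u \<in> N" "x \<in> N" then show ?thesis using fN g3e by simp
      next
        assume "u \<in> N" "x \<in> P" "x \<in> W k" then show ?thesis using fN[of u] fPW[of x] r2[of x] by simp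
      next
        assume "u \<in> N" "x \<in> P" "x \<notin> W k" "x \<in> Ak1" then show ?thesis using fN[of u] fP1[of x] r1[of x] by simp
      next
        assume a: "u \<in> P" "u \<in> W k" "x \<in> Q \<union> M"
        then show ?thesis using noPQ[of u x] noPM[of u x] e e' by blast
      next
        assume "u \<in> P" "u \<in> W k" "x \<in> N" then show ?thesis using fN[of x] fPW[of u] r2[of u] by simp
      next
        assume "u \<in> P" "u \<in> W k" "x \<in> P" "x \<in> W k" then show ?thesis using fPW g2e by simp
      next
        assume "u \<in> P" "u \<in> W k" "x \<in> P" "x \<notin> W k" "x \<in> Ak1" then show ?thesis using fPW[of u] fP1[of x] r1[of x] by simp
      next
        assume a: "u \<in> P" "u \<notin> W k" "u \<in> Ak1" "x \<in> Q \<union> M"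
        then show ?thesis using noPQ[of u x] noPM[of u x] e e' by blast
      next
        assume "u \<in> P" "u \<notin> W k" "u \<in> Ak1" "x \<in> N" then show ?thesis using fN[of x] fP1[of u] r1[of u] by simp
      next
        assume "u \<in> P" "u \<notin> W k" "u \<in> Ak1" "x \<in> P" "x \<in> W k" then show ?thesis using fPW[of x] fP1[of u] r1[of u] by simp
      next
        assume "u \<in> P" "u \<notin> W k" "u \<in> Ak1" "x \<in> P" "x \<notin> W k" "x \<in> Ak1" then show ?thesis using fP1 g1e by simp
      qed
    qed
    have early: "\<forall>i\<in>{1..n}. \<forall>v\<in>U \<inter> W i. allsmall E c (U \<inter> lowset W i) \<longrightarrow> f v < c + w"
    proof (intro ballI impI)
      fix i v assume i: "i \<in> {1..n}" and v: "v \<in> U \<inter> W i" and sm: "allsmall E c (U \<inter> lowset W i)"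
      have "i < k"
      proof (rule ccontr)
        assume "\<not> i < k"
        then have "U \<inter> lowset W k \<subseteq> U \<inter> lowset W i" using lowset_mono[of k i] by auto
        then show False using allsmall_anti[OF sm] k1 by blast
      qed
      then have vA1: "v \<in> Ak1" using memA1 v i by auto
      then have vA: "v \<in> Ak" using Ak_split by blast
      have vW: "v \<notin> W k" using lev_unique[of v i k] v i kr \<open>i < k\<close> by auto
      show "f v < c + w"
      proof (cases "v \<in> Q")
        case True then show ?thesis using fQM Qearly by simp
      next
        case False then have "v \<in> P" using vA unfolding Q_def by blast
        then show ?thesis using fP1[of v] vW r1[OF vA1] by simp
      qed
    qed
    show ?thesis using propc early by blast
  qed
qed

end


theorem mainTheorem2:
  fixes V :: "'a set" and E :: "'a \<Rightarrow> 'a \<Rightarrow> bool" and n w c :: nat and W :: "nat \<Rightarrow> 'a set"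
  assumes "simple_graph V E"
    and "w_colourable_grading E V n W w"
    and "chi E V > w + 2 * c"
  shows "\<exists>X Y. X \<subseteq> V \<and> Y \<subseteq> V \<and> connected_induced E X \<and> connected_induced E Y
    \<and> (\<forall>y\<in>Y. \<forall>x\<in>X. earlier n W y x)
    \<and> (\<exists>x\<in>X. \<exists>y\<in>Y. E x y)
    \<and> chi E X > c \<and> chi E Y > c"
proof (rule ccontr)
  assume neg: "\<not> ?thesis"
  have gr: "grading V n W" and wc: "\<forall>i\<in>{1..n}. chi E (W i) \<le> w"
    using assms(2) unfolding w_colourable_grading_def by auto
  have nopair: "\<forall>X Y. X \<subseteq> V \<longrightarrow> Y \<subseteq> V \<longrightarrow> connected_induced E X \<longrightarrow> connected_induced E Y
        \<longrightarrow> (\<forall>y\<in>Y. \<forall>x\<in>X. earlier n W y x) \<longrightarrow> (\<exists>x\<in>X. \<exists>y\<in>Y. E x y) \<longrightarrow> chi E X \<le> c \<or> chi E Y \<le> c"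
  proof (intro allI impI)
    fix X Y
    assume h: "X \<subseteq> V" "Y \<subseteq> V" "connected_induced E X" "connected_induced E Y"
      "\<forall>y\<in>Y. \<forall>x\<in>X. earlier n W y x" "\<exists>x\<in>X. \<exists>y\<in>Y. E x y"
    show "chi E X \<le> c \<or> chi E Y \<le> c"
    proof (rule ccontr)
      assume "\<not> (chi E X \<le> c \<or> chi E Y \<le> c)"
      then have "c < chi E X" "c < chi E Y" by auto
      then show False using neg h by blast
    qed
  qed
  obtain f where "proper_colouring E V (w + 2 * c) f"
    using claim[OF assms(1) gr wc nopair order_refl] by blast
  then have "chi E V \<le> w + 2 * c" by (rule chi_le)
  with assms(3) show False by simp
qed

end
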